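(* Let $G=(V,E)$ be a graph with a partition $(V_1,V_2)$ of $V$ such that $G[V_1]$ and $G[V_2]$ are $P_5$-free, and let $k$ be an integer. Suppose that: $k\ge 1$; $G$ contains a $P_5$; every vertex of $G$ lies on some $P_5$ in $G$; every $P_5$ in $G$ contains at least $4$ vertices of $V_2$; and there is no vertex $v\in V_2$ that is isolated in $G[V_2]$ and for which there is a path $(v,w,x,y,z)$ in $G$ with $w\in V_1$. Let $e=\{u,v\}$ be an edge of $G[V_2]$ such that at least two vertices of $V_1$ are adjacent to $u$ or $v$, and each of $u$ and $v$ has at least one neighbour in $V_1$. Let $C_e$ be the connected component of $G[V_2]$ containing $e$. Then every vertex $w\in V_1$ adjacent to $u$ or $v$ satisfies $N(w)\subseteq V(C_e)$.
   Context: Graphs are finite, simple and undirected. A $P_5$ is a path on $5$ vertices (as a not necessarily induced subgraph), written as the sequence of its vertices; a graph is $P_5$-free if it contains no $P_5$. $G[X]$ denotes the subgraph induced by $X$; $N(w)$ is the set of neighbours of $w$ in $G$. *)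

theory Defs
  imports Main
begin

definition graph :: "'a set \<Rightarrow> ('a \<Rightarrow> 'a \<Rightarrow> bool) \<Rightarrow> bool" where
  "graph V E \<longleftrightarrow> finite V \<and> (\<forall>x y. E x y \<longrightarrow> x \<in> V \<and> y \<in> V)
     \<and> (\<forall>x y. E x y \<longrightarrow> E y x) \<and> (\<forall>x. \<not> E x x)"

definition induced :: "('a \<Rightarrow> 'a \<Rightarrow> bool) \<Rightarrow> 'a set \<Rightarrow> 'a \<Rightarrow> 'a \<Rightarrow> bool" where
  "induced E X = (\<lambda>x y. E x y \<and> x \<in> X \<and> y \<in> X)"

text \<open>A P5 (not necessarily induced) in the graph (V,E), as the sequence of its vertices.\<close>
definition is_P5 :: "'a set \<Rightarrow> ('a \<Rightarrow> 'a \<Rightarrow> bool) \<Rightarrow> 'a list \<Rightarrow> bool" where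
  "is_P5 V E p \<longleftrightarrow> length p = 5 \<and> distinct p \<and> set p \<subseteq> V
     \<and> (\<forall>i<4. E (p ! i) (p ! Suc i))"

definition P5_free :: "'a set \<Rightarrow> ('a \<Rightarrow> 'a \<Rightarrow> bool) \<Rightarrow> bool" where
  "P5_free V E \<longleftrightarrow> \<not> (\<exists>p. is_P5 V E p)"

definition component :: "'a set \<Rightarrow> ('a \<Rightarrow> 'a \<Rightarrow> bool) \<Rightarrow> 'a \<Rightarrow> 'a set" where
  "component V E u = {y \<in> V. E\<^sup>*\<^sup>* u y}"

definition nbhd :: "'a set \<Rightarrow> ('a \<Rightarrow> 'a \<Rightarrow> bool) \<Rightarrow> 'a \<Rightarrow> 'a set" where
  "nbhd V E w = {x \<in> V. E w x}"

end

theory Submission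
  imports Defs
begin

lemma P5I:
  assumes G: "graph V E" and d: "distinct [a,b,c,d,e]"
    and "E a b" "E b c" "E c d" "E d e"
  shows "is_P5 V E [a,b,c,d,e]"
proof -
  have "a \<in> V" "b \<in> V" "c \<in> V" "d \<in> V" "e \<in> V"
    using G assms(3-6) unfolding graph_def by blast+
  moreover have "\<forall>i<4. E ([a,b,c,d,e] ! i) ([a,b,c,d,e] ! Suc i)"
  proof (intro allI impI)
    fix i :: nat assume "i < 4"
    then have "i = 0 \<or> i = 1 \<or> i = 2 \<or> i = 3" by auto
    then show "E ([a,b,c,d,e] ! i) ([a,b,c,d,e] ! Suc i)"
      using assms(3-6) by auto
  qed
  ultimately show ?thesis using d unfolding is_P5_def by simp
qed

lemma bad:
  assumes four: "\<forall>p. is_P5 V E p \<longrightarrow> card (set p \<inter> V2) \<ge> 4"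
    and p: "is_P5 V E p" and "a \<in> set p" "b \<in> set p" "a \<noteq> b" "a \<notin> V2" "b \<notin> V2"
  shows False
proof -
  have c5: "card (set p) = 5" using p distinct_card unfolding is_P5_def by metis
  have sub: "set p \<inter> V2 \<subseteq> set p - {a,b}" using assms by auto
  have "card (set p - {a,b}) = 3" using c5 assms(3-5) by (simp add: card_Diff_subset)
  then have "card (set p \<inter> V2) \<le> 3" using card_mono[OF _ sub] by simp
  with four p show False by fastforce
qed

lemma cyc:
  assumes G: "graph V E"
    and four: "\<forall>p. is_P5 V E p \<longrightarrow> card (set p \<inter> V2) \<ge> 4"
    and cover: "\<forall>x\<in>V. \<exists>p. is_P5 V E p \<and> x \<in> set p"
    and d: "distinct [a,b,c,d]" and e: "E a b" "E b c" "E c d" "E d a"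
    and ab: "a \<notin> V2" "b \<notin> V2"
  shows False
proof -
  have sym: "\<And>x y. E x y \<Longrightarrow> E y x" using G unfolding graph_def by blast
  have "a \<in> V" using G e unfolding graph_def by blast
  then obtain p where p: "is_P5 V E p" "a \<in> set p" using cover by blast
  let ?S = "{a,b,c,d}"
  have c5: "card (set p) = 5" using p distinct_card unfolding is_P5_def by metis
  have "\<not> set p \<subseteq> ?S"
  proof
    assume "set p \<subseteq> ?S"
    then have "card (set p) \<le> card ?S" by (simp add: card_mono)
    also have "card ?S \<le> 4" by (simp add: card_insert_le_m1)
    finally show False using c5 by simp
  qed
  then obtain q where q: "q \<in> set p" "q \<notin> ?S" by blast
  have "length p = 5" using p unfolding is_P5_def by simp
  then obtain p0 p1 p2 p3 p4 where pe: "p = [p0,p1,p2,p3,p4]"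
    by (auto simp: numeral_eq_Suc length_Suc_conv)
  have al: "\<forall>i<4. E (p!i) (p!Suc i)" using p(1) unfolding is_P5_def by simp
  have ed: "E p0 p1" "E p1 p2" "E p2 p3" "E p3 p4"
    using al[rule_format, of 0] al[rule_format, of 1] al[rule_format, of 2] al[rule_format, of 3]
    unfolding pe by (simp_all add: numeral_eq_Suc)
  have "\<exists>y z. E y z \<and> y \<notin> ?S \<and> z \<in> ?S"
  proof (rule ccontr)
    assume nex: "\<not> (\<exists>y z. E y z \<and> y \<notin> ?S \<and> z \<in> ?S)"
    have h: "x \<in> ?S \<longleftrightarrow> x' \<in> ?S" if "E x x'" for x x'
      using nex that sym by blast
    have "p0 \<in> ?S \<longleftrightarrow> p1 \<in> ?S" "p1 \<in> ?S \<longleftrightarrow> p2 \<in> ?S"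
       "p2 \<in> ?S \<longleftrightarrow> p3 \<in> ?S" "p3 \<in> ?S \<longleftrightarrow> p4 \<in> ?S"
      using h[OF ed(1)] h[OF ed(2)] h[OF ed(3)] h[OF ed(4)] by auto
    moreover have "a \<in> ?S" by simp
    moreover have "a = p0 \<or> a = p1 \<or> a = p2 \<or> a = p3 \<or> a = p4" using p(2) pe by simp
    moreover have "q = p0 \<or> q = p1 \<or> q = p2 \<or> q = p3 \<or> q = p4" using q(1) pe by simp
    ultimately show False using q(2) by (metis (no_types, lifting))
  qed
  then obtain y z where yz: "E y z" "y \<notin> ?S" "z \<in> ?S" by blast
  have yd: "y \<noteq> a" "y \<noteq> b" "y \<noteq> c" "y \<noteq> d" using yz by auto
  consider "z = a" | "z = b" | "z = c" | "z = d" using yz by auto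
  then show False
  proof cases
    case 1
    have P: "is_P5 V E [y,a,b,c,d]" using P5I[OF G] d yd yz e 1 by simp
    show False using bad[OF four P, of a b] ab d by simp
  next
    case 2
    have P: "is_P5 V E [y,b,a,d,c]" using P5I[OF G] d yd yz e 2 sym by (simp add: eq_commute)
    show False using bad[OF four P, of a b] ab d by simp
  next
    case 3
    have P: "is_P5 V E [y,c,b,a,d]" using P5I[OF G] d yd yz e 3 sym by (simp add: eq_commute)
    show False using bad[OF four P, of a b] ab d by simp
  next
    case 4
    have P: "is_P5 V E [y,d,a,b,c]" using P5I[OF G] d yd yz e 4 sym by (simp add: eq_commute)
    show False using bad[OF four P, of a b] ab d by simp
  qed
qed



lemma orient:
  assumes G: "graph V E"
    and part: "V1 \<inter> V2 = {}"
    and four: "\<forall>p. is_P5 V E p \<longrightarrow> card (set p \<inter> V2) \<ge> 4"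
    and cover: "\<forall>x\<in>V. \<exists>p. is_P5 V E p \<and> x \<in> set p"
    and edge: "u \<in> V2" "v \<in> V2" "E u v"
    and two: "card {w \<in> V1. E w u \<or> E w v} \<ge> 2"
    and nv: "\<exists>w\<in>V1. E v w"
    and w: "w \<in> V1" "E w u" "E w x" and xuv: "x \<noteq> u" "x \<noteq> v"
  shows False
proof -
  have sym: "\<And>x y. E x y \<Longrightarrow> E y x" using G unfolding graph_def by blast
  have irr: "\<And>x. \<not> E x x" using G unfolding graph_def by blast
  have n2: "\<And>z. z \<in> V1 \<Longrightarrow> z \<notin> V2" using part by blast
  have wx: "w \<noteq> x" using irr w by metis
  have wu: "w \<noteq> u" "w \<noteq> v" using n2 w edge by auto
  have uv: "u \<noteq> v" using irr edge by metis
  obtain w' where w': "w' \<in> V1" "E v w'" using nv by blast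
  have w'uv: "w' \<noteq> u" "w' \<noteq> v" using n2 w' edge by auto
  show False
  proof (cases "w' = w")
    case False
    show False
    proof (cases "w' = x")
      case True
      show False
        by (rule cyc[OF G four cover, of x w u v])
           (use True False wx xuv wu uv w w' edge sym n2 in auto)
    next
      case F2: False
      have P: "is_P5 V E [x,w,u,v,w']"
        using P5I[OF G] False F2 wx xuv wu uv w w' w'uv edge sym by (simp add: eq_commute)
      show False using bad[OF four P, of w w'] n2 w w' False by simp
    qed
  next
    case True
    have "\<exists>w''\<in>{w \<in> V1. E w u \<or> E w v}. w'' \<noteq> w"
    proof (rule ccontr)
      assume "\<not> ?thesis"
      then have "{w \<in> V1. E w u \<or> E w v} \<subseteq> {w}" by blast
      then have "card {w \<in> V1. E w u \<or> E w v} \<le> card {w}" by (intro card_mono) auto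
      with two show False by simp
    qed
    then obtain w'' where w'': "w'' \<in> V1" "E w'' u \<or> E w'' v" "w'' \<noteq> w" by blast
    have w''uv: "w'' \<noteq> u" "w'' \<noteq> v" using n2 w'' edge by auto
    have wv: "E w v" using True w' sym by simp
    show False
    proof (cases "w'' = x")
      case T2: True
      show False
      proof (cases "E x u")
        case True
        show False
          by (rule cyc[OF G four cover, of x w v u])
             (use True T2 wx xuv wu uv w w'' wv edge sym n2 in auto)
      next
        case False
        then have "E x v" using T2 w'' by simp
        then show False
          by (intro cyc[OF G four cover, of x w u v])
             (use T2 wx xuv wu uv w w'' wv edge sym n2 in auto)
      qed
    next
      case F2: False
      show False
      proof (cases "E w'' u")
        case True
        have P: "is_P5 V E [x,w,v,u,w'']"
          using P5I[OF G] True F2 wx xuv wu uv w w'' w''uv wv edge sym by (simp add: eq_commute)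
        show False using bad[OF four P, of w w''] n2 w w'' by simp
      next
        case False
        then have "E w'' v" using w'' by simp
        then have P: "is_P5 V E [x,w,u,v,w'']"
          using P5I[OF G] F2 wx xuv wu uv w w'' w''uv wv edge sym by (simp add: eq_commute)
        show False using bad[OF four P, of w w''] n2 w w'' by simp
      qed
    qed
  qed
qed

theorem lemma6:
  fixes V V1 V2 :: "'a set" and E :: "'a \<Rightarrow> 'a \<Rightarrow> bool" and k :: int and u v :: 'a
  assumes G: "graph V E"
    and part: "V1 \<union> V2 = V" "V1 \<inter> V2 = {}"
    and free1: "P5_free V1 (induced E V1)"
    and free2: "P5_free V2 (induced E V2)"
    and k: "k \<ge> 1"
    and hasP5: "\<exists>p. is_P5 V E p"
    and cover: "\<forall>x\<in>V. \<exists>p. is_P5 V E p \<and> x \<in> set p"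
    and four: "\<forall>p. is_P5 V E p \<longrightarrow> card (set p \<inter> V2) \<ge> 4"
    and noiso: "\<not> (\<exists>x\<in>V2. (\<forall>y\<in>V2. \<not> E x y) \<and>
                    (\<exists>w y z t. is_P5 V E [x, w, y, z, t] \<and> w \<in> V1))"
    and edge: "u \<in> V2" "v \<in> V2" "E u v"
    and two: "card {w \<in> V1. E w u \<or> E w v} \<ge> 2"
    and nu: "\<exists>w\<in>V1. E u w" and nv: "\<exists>w\<in>V1. E v w"
  shows "\<forall>w\<in>V1. (E w u \<or> E w v) \<longrightarrow>
           nbhd V E w \<subseteq> component V2 (induced E V2) u"
proof (intro ballI impI subsetI)
  fix w y assume w: "w \<in> V1" "E w u \<or> E w v" and y: "y \<in> nbhd V E w"
  have sym: "\<And>x y. E x y \<Longrightarrow> E y x" using G unfolding graph_def by blast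
  have Ey: "E w y" using y unfolding nbhd_def by simp
  have two': "card {w \<in> V1. E w v \<or> E w u} \<ge> 2" using two by (simp add: disj_commute)
  have "y = u \<or> y = v"
  proof (rule ccontr)
    assume "\<not> (y = u \<or> y = v)"
    then have yy: "y \<noteq> u" "y \<noteq> v" by auto
    show False
    proof (cases "E w u")
      case True
      show False by (rule orient[OF G part(2) four cover edge two nv w(1) True Ey yy])
    next
      case False
      then have "E w v" using w by simp
      show False by (rule orient[OF G part(2) four cover edge(2,1) sym[OF edge(3)] two' nu w(1) \<open>E w v\<close> Ey yy(2,1)])
    qed
  qed
  moreover have "u \<in> component V2 (induced E V2) u" using edge unfolding component_def by simp
  moreover have "v \<in> component V2 (induced E V2) u" using edge unfolding component_def induced_def
    by (simp add: r_into_rtranclp)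
  ultimately show "y \<in> component V2 (induced E V2) u" by blast
qed

end
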